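(* Let $p\in[1,\infty)$ and $w$ a weight sequence. A set $A\subset L_{p,w}$ is precompact if and only if it is bounded in $\|\cdot\|_{p,w}$ and $$\forall\varepsilon>0\ \exists N\in\mathbb{N}\ \forall a\in A\ \forall i\ge N:\ \sum_{j=i+1}^\infty|a_j|^p\, w_{(\sigma^a)^{-1}_j}<\varepsilon.$$
   Context: A weight sequence is a sequence $w=(w_i)$ of positive reals with $w_1=1\ge w_2\ge\dots$, $w_i\to0$, and $\sum_i w_i=+\infty$. For a real sequence $a$, $\|a\|_{p,w}=\sup_{\sigma}\big(\sum_{i=1}^\infty |a_{\sigma_i}|^p w_i\big)^{1/p}$ over all permutations $\sigma$ of $\mathbb{N}$; $L_{p,w}$ is the set of real sequences with finite norm. For $a\in L_{p,w}$, $\sigma^a:\mathbb{N}\to\mathbb{N}$ is defined recursively: $\sigma^a_i$ is the element $j$ of $\mathbb{N}\setminus\{\sigma^a_1,\dots,\sigma^a_{i-1}\}$ with $|a_j|$ maximal, taking the smallest such index in case of ties (well defined for $a\in L_{p,w}$, injective, with $|a_{\sigma^a_i}|$ nonincreasing). $(\sigma^a)^{-1}$ is its inverse on $\sigma^a(\mathbb{N})$, with the convention $w_{(\sigma^a)^{-1}_j}:=0$ if $j\notin\sigma^a(\mathbb{N})$. A set is precompact if for every $\varepsilon>0$ it has a finite cover by sets of radius at most $\varepsilon$. *)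

theory Defs
  imports "HOL-Analysis.Analysis"
begin

text \<open>Indexing convention: sequences are indexed from 0 (index k here corresponds to
index k+1 in the paper).\<close>

definition weight_seq :: "(nat \<Rightarrow> real) \<Rightarrow> bool" where
  "weight_seq w \<longleftrightarrow> (\<forall>i. w i > 0) \<and> w 0 = 1 \<and> antimono w \<and> w \<longlonglongrightarrow> 0
     \<and> \<not> summable w"

definition pw_pow :: "real \<Rightarrow> (nat \<Rightarrow> real) \<Rightarrow> (nat \<Rightarrow> real) \<Rightarrow> ennreal" where
  "pw_pow p w a = (SUP \<sigma> \<in> {\<sigma>::nat \<Rightarrow> nat. bij \<sigma>}. (\<Sum>i. ennreal (\<bar>a (\<sigma> i)\<bar> powr p * w i)))"

definition Lpw :: "real \<Rightarrow> (nat \<Rightarrow> real) \<Rightarrow> (nat \<Rightarrow> real) set" where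
  "Lpw p w = {a. pw_pow p w a < \<infinity>}"

definition normpw :: "real \<Rightarrow> (nat \<Rightarrow> real) \<Rightarrow> (nat \<Rightarrow> real) \<Rightarrow> real" where
  "normpw p w a = (enn2real (pw_pow p w a)) powr (1 / p)"

definition pick :: "(nat \<Rightarrow> real) \<Rightarrow> nat set \<Rightarrow> nat" where
  "pick a U = (LEAST j. j \<notin> U \<and> (\<forall>k. k \<notin> U \<longrightarrow> \<bar>a k\<bar> \<le> \<bar>a j\<bar>))"

primrec used :: "(nat \<Rightarrow> real) \<Rightarrow> nat \<Rightarrow> nat set" where
  "used a 0 = {}"
| "used a (Suc n) = insert (pick a (used a n)) (used a n)"

text \<open>The decreasing rearrangement map sigma^a: sigma_a a i = index of the i-th largest entry.\<close>
definition sigma_a :: "(nat \<Rightarrow> real) \<Rightarrow> nat \<Rightarrow> nat" where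
  "sigma_a a i = pick a (used a i)"

definition w_inv :: "(nat \<Rightarrow> real) \<Rightarrow> (nat \<Rightarrow> real) \<Rightarrow> nat \<Rightarrow> real" where
  "w_inv w a j = (if j \<in> range (sigma_a a) then w (THE i. sigma_a a i = j) else 0)"

definition precompact_pw :: "real \<Rightarrow> (nat \<Rightarrow> real) \<Rightarrow> (nat \<Rightarrow> real) set \<Rightarrow> bool" where
  "precompact_pw p w A \<longleftrightarrow> (\<forall>\<epsilon>>0. \<exists>F. finite F \<and> F \<subseteq> Lpw p w \<and>
       A \<subseteq> (\<Union>c\<in>F. {b \<in> Lpw p w. normpw p w (b - c) \<le> \<epsilon>}))"

definition bounded_pw :: "real \<Rightarrow> (nat \<Rightarrow> real) \<Rightarrow> (nat \<Rightarrow> real) set \<Rightarrow> bool" where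
  "bounded_pw p w A \<longleftrightarrow> (\<exists>M. \<forall>a\<in>A. normpw p w a \<le> M)"

end

theory Submission
  imports Defs
begin

section \<open>Greedy rearrangement\<close>

lemma pick_ex:
  fixes a :: "nat \<Rightarrow> real"
  assumes a0: "a \<longlonglongrightarrow> 0" and fU: "finite U"
  shows "\<exists>j. j \<notin> U \<and> (\<forall>k. k \<notin> U \<longrightarrow> \<bar>a k\<bar> \<le> \<bar>a j\<bar>)"
proof (cases "\<forall>k. k \<notin> U \<longrightarrow> a k = 0")
  case True
  obtain j0 where "j0 \<notin> U" using fU infinite_UNIV_nat ex_new_if_finite by blast
  then show ?thesis using True by (intro exI[of _ j0]) auto
next
  case False
  then obtain k1 where k1: "k1 \<notin> U" "a k1 \<noteq> 0" by blast
  define S where "S = {k. \<bar>a k1\<bar> \<le> \<bar>a k\<bar>}"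
  have "\<forall>\<^sub>F n in sequentially. \<bar>a n\<bar> < \<bar>a k1\<bar>"
    using a0 k1(2) unfolding tendsto_iff by (auto simp: dist_real_def)
  then obtain N where N: "\<And>n. n \<ge> N \<Longrightarrow> \<bar>a n\<bar> < \<bar>a k1\<bar>" by (auto simp: eventually_sequentially)
  have "S \<subseteq> {..<N}"
  proof
    fix k assume "k \<in> S"
    show "k \<in> {..<N}"
    proof (rule ccontr)
      assume "k \<notin> {..<N}"
      then show False using N[of k] \<open>k \<in> S\<close> by (auto simp: S_def)
    qed
  qed
  hence fS: "finite (S - U)" using finite_subset by blast
  have ne: "k1 \<in> S - U" using k1 by (auto simp: S_def)
  define m where "m = Max ((\<lambda>k. \<bar>a k\<bar>) ` (S - U))"
  have "m \<in> (\<lambda>k. \<bar>a k\<bar>) ` (S - U)" unfolding m_def using fS ne by (intro Max_in) auto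
  then obtain j where j: "j \<in> S - U" "\<bar>a j\<bar> = m" by auto
  have "\<forall>k. k \<notin> U \<longrightarrow> \<bar>a k\<bar> \<le> \<bar>a j\<bar>"
  proof (intro allI impI)
    fix k assume "k \<notin> U"
    show "\<bar>a k\<bar> \<le> \<bar>a j\<bar>"
    proof (cases "k \<in> S")
      case True
      then show ?thesis using j fS \<open>k \<notin> U\<close> unfolding m_def by (auto intro!: Max_ge)
    next
      case False
      then show ?thesis using j by (auto simp: S_def)
    qed
  qed
  then show ?thesis using j by auto
qed

lemma pick_props:
  assumes "a \<longlonglongrightarrow> 0" "finite U"
  shows "pick a U \<notin> U" "\<And>k. k \<notin> U \<Longrightarrow> \<bar>a k\<bar> \<le> \<bar>a (pick a U)\<bar>"
proof -
  from pick_ex[OF assms] obtain j where "j \<notin> U \<and> (\<forall>k. k \<notin> U \<longrightarrow> \<bar>a k\<bar> \<le> \<bar>a j\<bar>)" by blast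
  hence "pick a U \<notin> U \<and> (\<forall>k. k \<notin> U \<longrightarrow> \<bar>a k\<bar> \<le> \<bar>a (pick a U)\<bar>)"
    unfolding pick_def by (rule LeastI)
  then show "pick a U \<notin> U" "\<And>k. k \<notin> U \<Longrightarrow> \<bar>a k\<bar> \<le> \<bar>a (pick a U)\<bar>" by auto
qed

lemma used_eq: "used a n = sigma_a a ` {..<n}"
  by (induction n) (auto simp: sigma_a_def lessThan_Suc)

lemma used_finite: "finite (used a n)"
  by (simp add: used_eq)

lemma used_mono: "m \<le> n \<Longrightarrow> used a m \<subseteq> used a n"
  by (auto simp: used_eq)

context
  fixes a :: "nat \<Rightarrow> real"
  assumes a0: "a \<longlonglongrightarrow> 0"
begin

lemma sigma_notin: "sigma_a a n \<notin> used a n"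
  unfolding sigma_a_def by (rule pick_props(1)[OF a0 used_finite])

lemma sigma_max: "k \<notin> used a n \<Longrightarrow> \<bar>a k\<bar> \<le> \<bar>a (sigma_a a n)\<bar>"
  unfolding sigma_a_def by (rule pick_props(2)[OF a0 used_finite])

lemma sigma_inj: "inj (sigma_a a)"
proof (rule injI)
  fix m n assume eq: "sigma_a a m = sigma_a a n"
  show "m = n"
  proof (rule ccontr)
    assume "m \<noteq> n"
    then consider "m < n" | "n < m" by linarith
    then show False
    proof cases
      case 1
      then have "sigma_a a m \<in> used a n" by (auto simp: used_eq)
      then show False using sigma_notin[of n] eq by simp
    next
      case 2
      then have "sigma_a a n \<in> used a m" by (auto simp: used_eq)
      then show False using sigma_notin[of m] eq by simp
    qed
  qed
qed

lemma card_used: "card (used a n) = n"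
  using sigma_inj by (simp add: used_eq card_image inj_on_subset)

lemma used_top: "j \<in> used a n \<Longrightarrow> k \<notin> used a n \<Longrightarrow> \<bar>a k\<bar> \<le> \<bar>a j\<bar>"
proof -
  assume j: "j \<in> used a n" and k: "k \<notin> used a n"
  then obtain m where m: "m < n" "j = sigma_a a m" by (auto simp: used_eq)
  have "k \<notin> used a m" using k used_mono[of m n a] m by auto
  then show ?thesis using sigma_max m by simp
qed

lemma sigma_decr: "m \<le> n \<Longrightarrow> \<bar>a (sigma_a a n)\<bar> \<le> \<bar>a (sigma_a a m)\<bar>"
proof -
  assume "m \<le> n"
  hence "sigma_a a n \<notin> used a m" using sigma_notin[of n] used_mono[of m n a] by blast
  then show ?thesis by (rule sigma_max)
qed

lemma sigma_nonzero: "a j \<noteq> 0 \<Longrightarrow> j \<in> range (sigma_a a)"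
proof (rule ccontr)
  assume aj: "a j \<noteq> 0" and nr: "j \<notin> range (sigma_a a)"
  have "\<forall>\<^sub>F n in sequentially. \<bar>a n\<bar> < \<bar>a j\<bar>"
    using a0 aj unfolding tendsto_iff by (auto simp: dist_real_def)
  then obtain N where N: "\<And>n. n \<ge> N \<Longrightarrow> \<bar>a n\<bar> < \<bar>a j\<bar>" by (auto simp: eventually_sequentially)
  have le: "\<And>n. \<bar>a j\<bar> \<le> \<bar>a (sigma_a a n)\<bar>"
    using nr by (intro sigma_max) (auto simp: used_eq)
  have "sigma_a a n < N" for n
  proof (rule ccontr)
    assume "\<not> sigma_a a n < N"
    then have "N \<le> sigma_a a n" by simp
    then show False using N[of "sigma_a a n"] le[of n] by simp
  qed
  hence "range (sigma_a a) \<subseteq> {..<N}" by auto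
  hence "finite (range (sigma_a a))" using finite_subset by blast
  hence "finite (UNIV::nat set)" using finite_imageD[OF _ sigma_inj] by blast
  then show False by simp
qed

end


lemma top_sum:
  fixes f :: "nat \<Rightarrow> real"
  assumes fS: "finite S" and fU: "finite U" and c: "card S \<le> card U"
    and le: "\<And>j k. j \<in> U \<Longrightarrow> k \<in> S \<Longrightarrow> k \<notin> U \<Longrightarrow> f k \<le> f j"
    and nn: "\<And>j. j \<in> U \<Longrightarrow> 0 \<le> f j"
  shows "sum f S \<le> sum f U"
proof -
  have sS: "sum f S = sum f (S \<inter> U) + sum f (S - U)" by (rule sum.Int_Diff[OF fS])
  have sU: "sum f U = sum f (U \<inter> S) + sum f (U - S)" by (rule sum.Int_Diff[OF fU])
  have c1: "card (S - U) = card S - card (S \<inter> U)" using fS by (simp add: card_Diff_subset_Int)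
  have c2: "card (U - S) = card U - card (U \<inter> S)" using fU by (simp add: card_Diff_subset_Int)
  have "card (S \<inter> U) \<le> card S" using fS by (simp add: card_mono)
  hence cc: "card (S - U) \<le> card (U - S)" using c1 c2 c by (simp add: Int_commute)
  have "sum f (S - U) \<le> sum f (U - S)"
  proof (cases "S - U = {}")
    case True
    have "sum f (S - U) = 0" unfolding True by simp
    moreover have "0 \<le> sum f (U - S)" using nn by (intro sum_nonneg) auto
    ultimately show ?thesis by simp
  next
    case False
    hence "card (S - U) > 0" using fS by (simp add: card_gt_0_iff)
    hence ne: "U - S \<noteq> {}" using cc by (metis card.empty not_le)
    define m where "m = Min (f ` (U - S))"
    have fin: "finite (f ` (U - S))" using fU by simp
    have m_le: "\<And>j. j \<in> U - S \<Longrightarrow> m \<le> f j" unfolding m_def using fin by (auto intro!: Min_le)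
    have "m \<in> f ` (U - S)" unfolding m_def using fin ne by (intro Min_in) auto
    then obtain j0 where j0: "j0 \<in> U - S" "m = f j0" by auto
    have m0: "0 \<le> m" using j0 nn by simp
    have "sum f (S - U) \<le> of_nat (card (S - U)) * m"
      by (rule sum_bounded_above) (use j0 le in auto)
    also have "\<dots> \<le> of_nat (card (U - S)) * m" using cc m0 by (intro mult_right_mono) auto
    also have "\<dots> \<le> sum f (U - S)" by (rule sum_bounded_below) (use m_le in auto)
    finally show ?thesis .
  qed
  then show ?thesis using sS sU by (simp add: Int_commute)
qed

lemma abel_identity:
  fixes d v :: "nat \<Rightarrow> real"
  shows "(\<Sum>i\<le>n. d i * v i) = (\<Sum>l<n. (\<Sum>i\<le>l. d i) * (v l - v (Suc l))) + (\<Sum>i\<le>n. d i) * v n"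
  by (induction n) (auto simp: algebra_simps)

lemma abel_le:
  fixes u u' v :: "nat \<Rightarrow> real"
  assumes pre: "\<And>l. l < K \<Longrightarrow> (\<Sum>i\<le>l. u i) \<le> (\<Sum>i\<le>l. u' i)"
    and vdec: "\<And>i. v (Suc i) \<le> v i" and vnn: "\<And>i. 0 \<le> v i"
  shows "(\<Sum>i<K. u i * v i) \<le> (\<Sum>i<K. u' i * v i)"
proof (cases K)
  case 0
  then show ?thesis by simp
next
  case (Suc n)
  define d where "d i = u' i - u i" for i
  have P: "0 \<le> (\<Sum>i\<le>l. d i)" if "l \<le> n" for l
    using pre[of l] that Suc by (simp add: d_def sum_subtractf)
  have A: "0 \<le> (\<Sum>l<n. (\<Sum>i\<le>l. d i) * (v l - v (Suc l)))"
  proof (rule sum_nonneg)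
    fix l assume "l \<in> {..<n}"
    then show "0 \<le> (\<Sum>i\<le>l. d i) * (v l - v (Suc l))"
      using P[of l] vdec[of l] by (intro mult_nonneg_nonneg) auto
  qed
  have B: "0 \<le> (\<Sum>i\<le>n. d i) * v n" using P[of n] vnn[of n] by (intro mult_nonneg_nonneg) auto
  have "0 \<le> (\<Sum>l<n. (\<Sum>i\<le>l. d i) * (v l - v (Suc l))) + (\<Sum>i\<le>n. d i) * v n"
    using A B by simp
  hence "0 \<le> (\<Sum>i\<le>n. d i * v i)" by (simp only: abel_identity)
  hence "0 \<le> (\<Sum>i\<le>n. u' i * v i - u i * v i)" by (simp add: d_def algebra_simps)
  then show ?thesis using Suc by (simp add: sum_subtractf lessThan_Suc_atMost)
qed


lemma sum_split_shift:
  fixes g :: "nat \<Rightarrow> real"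
  shows "(\<Sum>k<K+D. g k) = (\<Sum>k<D. g k) + (\<Sum>i<K. g (i + D))"
  by (induction K) (auto simp: add.commute)

lemma gen_bound:
  fixes a w :: "nat \<Rightarrow> real" and \<sigma> :: "nat \<Rightarrow> nat"
  assumes a0: "a \<longlonglongrightarrow> 0" and fH: "finite H" and cH: "card H \<le> D" and inj: "inj \<sigma>"
    and wdec: "antimono w" and wnn: "\<And>i. 0 \<le> w i" and p0: "0 \<le> p"
  shows "(\<Sum>i<K. (if \<sigma> i \<in> H then 0 else \<bar>a (\<sigma> i)\<bar> powr p) * w (i + D))
     \<le> (\<Sum>k<K+D. (if sigma_a a k \<in> H then 0 else \<bar>a (sigma_a a k)\<bar> powr p) * w k)"
proof -
  define f where "f j = (if j \<in> H then 0 else \<bar>a j\<bar> powr p)" for j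
  define s where "s = sigma_a a"
  define E where "E = (\<Sum>k<D. f (s k))"
  define u' where "u' i = (if i = 0 then E else 0) + f (s (i + D))" for i
  have fnn: "0 \<le> f j" for j by (simp add: f_def)
  have wSuc: "w (Suc i) \<le> w i" for i using wdec by (simp add: antimono_def)
  have u'sum: "(\<Sum>i\<le>l. u' i) = (\<Sum>k<Suc l + D. f (s k))" for l
    by (induction l) (simp_all add: u'_def E_def)
  have pre: "(\<Sum>i\<le>l. f (\<sigma> i)) \<le> (\<Sum>i\<le>l. u' i)" for l
  proof -
    define S where "S = \<sigma> ` {..l} - H"
    define U where "U = used a (Suc l + D) - H"
    have fzero: "\<And>j. j \<in> H \<Longrightarrow> f j = 0" by (simp add: f_def)
    have "(\<Sum>i\<le>l. f (\<sigma> i)) = sum f (\<sigma> ` {..l})"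
      using inj by (simp add: sum.reindex inj_on_subset)
    also have "\<dots> = sum f S"
      unfolding S_def by (rule sum.mono_neutral_right) (auto simp: fzero)
    also have "\<dots> \<le> sum f U"
    proof (rule top_sum)
      show "finite S" by (simp add: S_def)
      show "finite U" by (simp add: U_def used_finite)
      have "card S \<le> card (\<sigma> ` {..l})" unfolding S_def by (rule card_mono) auto
      also have "\<dots> \<le> Suc l" using card_image_le[of "{..l}" \<sigma>] by simp
      also have "Suc l \<le> card (used a (Suc l + D)) - card H" using cH card_used[OF a0, of "Suc l + D"] by linarith
      also have "\<dots> \<le> card U" unfolding U_def by (rule diff_card_le_card_Diff[OF fH])
      finally show "card S \<le> card U" .
      show "f k \<le> f j" if "j \<in> U" "k \<in> S" "k \<notin> U" for j k
      proof -
        have "k \<notin> H" "j \<notin> H" "j \<in> used a (Suc l + D)" using that by (auto simp: S_def U_def)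
        moreover have "k \<notin> used a (Suc l + D)" using that \<open>k \<notin> H\<close> by (auto simp: U_def)
        ultimately have "\<bar>a k\<bar> \<le> \<bar>a j\<bar>" using used_top[OF a0] by blast
        then show ?thesis using \<open>k \<notin> H\<close> \<open>j \<notin> H\<close> p0 by (simp add: f_def powr_mono2)
      qed
      show "0 \<le> f j" for j by (rule fnn)
    qed
    also have "\<dots> = sum f (used a (Suc l + D))"
      unfolding U_def by (rule sum.mono_neutral_left) (auto simp: fzero used_finite)
    also have "\<dots> = (\<Sum>k<Suc l + D. f (s k))"
      unfolding s_def used_eq using sigma_inj[OF a0] by (simp add: sum.reindex inj_on_subset)
    finally show ?thesis by (simp add: u'sum)
  qed
  have step1: "(\<Sum>i<K. f (\<sigma> i) * w (i + D)) \<le> (\<Sum>i<K. u' i * w (i + D))"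
    by (rule abel_le) (use pre wSuc wnn in auto)
  have step2: "(\<Sum>i<K. u' i * w (i + D)) \<le> (\<Sum>k<K+D. f (s k) * w k)"
  proof (cases K)
    case 0
    then show ?thesis using fnn wnn by (simp add: sum_nonneg)
  next
    case (Suc n)
    have uu: "u' i * w (i + D) = (if i = 0 then E * w D else 0) + f (s (i + D)) * w (i + D)" for i
      by (simp add: u'_def algebra_simps)
    have "(\<Sum>i<K. u' i * w (i + D)) = (\<Sum>i<K. (if i = 0 then E * w D else 0)) + (\<Sum>i<K. f (s (i + D)) * w (i + D))"
      unfolding uu by (rule sum.distrib)
    also have "(\<Sum>i<K. (if i = 0 then E * w D else 0)) = E * w D"
      using Suc by (simp add: sum.delta)
    finally have "(\<Sum>i<K. u' i * w (i + D)) = E * w D + (\<Sum>i<K. f (s (i + D)) * w (i + D))" .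
    also have "E * w D \<le> (\<Sum>k<D. f (s k) * w k)"
      unfolding E_def sum_distrib_right
      by (rule sum_mono) (use fnn wdec in \<open>auto intro!: mult_left_mono simp: antimono_def\<close>)
    finally show ?thesis by (simp add: sum_split_shift[of _ K D])
  qed
  show ?thesis using step1 step2 by (simp add: f_def s_def)
qed


section \<open>Rearrangement bounds for pw_pow\<close>

lemma extend_bij:
  fixes g :: "nat \<Rightarrow> nat"
  assumes inj: "inj_on g {..<K}"
  shows "\<exists>\<sigma>. bij \<sigma> \<and> (\<forall>i<K. \<sigma> i = g i)"
proof -
  define T where "T = g ` {..<K}"
  define C where "C = - T"
  have infC: "infinite C" unfolding C_def T_def
    using finite_imageI[of "{..<K}" g] by (metis Compl_eq_Diff_UNIV finite_Diff2 finite_lessThan infinite_UNIV_nat)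
  define e where "e = enumerate C"
  have be: "bij_betw e UNIV C" unfolding e_def by (rule bij_enumerate[OF infC])
  define \<sigma> where "\<sigma> i = (if i < K then g i else e (i - K))" for i
  have eC: "e n \<in> C" for n using be by (auto simp: bij_betw_def)
  have injs: "inj \<sigma>"
  proof (rule injI)
    fix i j assume eq: "\<sigma> i = \<sigma> j"
    show "i = j"
    proof (cases "i < K"; cases "j < K")
      assume "i < K" "j < K" then show ?thesis using eq inj by (auto simp: \<sigma>_def inj_on_def)
    next
      assume "i < K" "\<not> j < K"
      then have "\<sigma> i \<in> T" "\<sigma> j \<in> C" using eC by (auto simp: \<sigma>_def T_def)
      then show ?thesis using eq by (auto simp: C_def)
    next
      assume "\<not> i < K" "j < K"
      then have "\<sigma> j \<in> T" "\<sigma> i \<in> C" using eC by (auto simp: \<sigma>_def T_def)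
      then show ?thesis using eq by (auto simp: C_def)
    next
      assume "\<not> i < K" "\<not> j < K"
      then have "e (i - K) = e (j - K)" using eq by (simp add: \<sigma>_def)
      then have "i - K = j - K" using be by (auto simp: bij_betw_def inj_on_def)
      then show ?thesis using \<open>\<not> i < K\<close> \<open>\<not> j < K\<close> by simp
    qed
  qed
  have surjs: "surj \<sigma>"
  proof -
    have "y \<in> range \<sigma>" for y
    proof (cases "y \<in> T")
      case True
      then obtain i where "i < K" "y = g i" by (auto simp: T_def)
      then show ?thesis by (auto simp: \<sigma>_def intro!: image_eqI[of _ _ i])
    next
      case False
      then have "y \<in> C" by (simp add: C_def)
      then obtain n where "y = e n" using be by (auto simp: bij_betw_def)
      then have "\<sigma> (n + K) = y" by (simp add: \<sigma>_def)
      then show ?thesis by (metis rangeI)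
    qed
    then show ?thesis by auto
  qed
  show ?thesis using injs surjs by (auto simp: bij_def \<sigma>_def intro!: exI[of _ \<sigma>])
qed

lemma lb_pw:
  fixes b w :: "nat \<Rightarrow> real" and g :: "nat \<Rightarrow> nat"
  assumes inj: "inj g"
  shows "(\<Sum>i. ennreal (\<bar>b (g i)\<bar> powr p * w i)) \<le> pw_pow p w b"
  unfolding suminf_eq_SUP
proof (rule SUP_least)
  fix K
  obtain \<sigma> where \<sigma>: "bij \<sigma>" "\<forall>i<K. \<sigma> i = g i"
    using extend_bij[of g K] inj inj_on_subset by blast
  have "(\<Sum>i<K. ennreal (\<bar>b (g i)\<bar> powr p * w i)) = (\<Sum>i<K. ennreal (\<bar>b (\<sigma> i)\<bar> powr p * w i))"
    using \<sigma>(2) by simp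
  also have "\<dots> \<le> (\<Sum>i. ennreal (\<bar>b (\<sigma> i)\<bar> powr p * w i))"
    unfolding suminf_eq_SUP by (rule SUP_upper) simp
  also have "\<dots> \<le> pw_pow p w b"
    unfolding pw_pow_def by (rule SUP_upper) (use \<sigma>(1) in simp)
  finally show "(\<Sum>i<K. ennreal (\<bar>b (g i)\<bar> powr p * w i)) \<le> pw_pow p w b" .
qed

lemma ub_pw:
  fixes a w :: "nat \<Rightarrow> real"
  assumes a0: "a \<longlonglongrightarrow> 0" and wdec: "antimono w" and wnn: "\<And>i. 0 \<le> w i" and p0: "0 \<le> p"
  shows "pw_pow p w a \<le> (\<Sum>k. ennreal (\<bar>a (sigma_a a k)\<bar> powr p * w k))"
  unfolding pw_pow_def
proof (rule SUP_least)
  fix \<sigma> :: "nat \<Rightarrow> nat" assume "\<sigma> \<in> {\<sigma>. bij \<sigma>}"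
  hence inj: "inj \<sigma>" by (simp add: bij_is_inj)
  show "(\<Sum>i. ennreal (\<bar>a (\<sigma> i)\<bar> powr p * w i)) \<le> (\<Sum>k. ennreal (\<bar>a (sigma_a a k)\<bar> powr p * w k))"
    unfolding suminf_eq_SUP[of "\<lambda>i. ennreal (\<bar>a (\<sigma> i)\<bar> powr p * w i)"]
  proof (rule SUP_least)
    fix K
    have "(\<Sum>i<K. ennreal (\<bar>a (\<sigma> i)\<bar> powr p * w i)) = ennreal (\<Sum>i<K. \<bar>a (\<sigma> i)\<bar> powr p * w i)"
      using wnn by (intro sum_ennreal) auto
    also have "(\<Sum>i<K. \<bar>a (\<sigma> i)\<bar> powr p * w i) \<le> (\<Sum>k<K. \<bar>a (sigma_a a k)\<bar> powr p * w k)"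
      using gen_bound[OF a0 finite.emptyI _ inj wdec wnn p0, of 0 K] by simp
    hence "ennreal (\<Sum>i<K. \<bar>a (\<sigma> i)\<bar> powr p * w i) \<le> ennreal (\<Sum>k<K. \<bar>a (sigma_a a k)\<bar> powr p * w k)"
      by (rule ennreal_leI)
    also have "\<dots> = (\<Sum>k<K. ennreal (\<bar>a (sigma_a a k)\<bar> powr p * w k))"
      using wnn by (intro sum_ennreal[symmetric]) auto
    also have "\<dots> \<le> (\<Sum>k. ennreal (\<bar>a (sigma_a a k)\<bar> powr p * w k))"
      unfolding suminf_eq_SUP by (rule SUP_upper) simp
    finally show "(\<Sum>i<K. ennreal (\<bar>a (\<sigma> i)\<bar> powr p * w i)) \<le> (\<Sum>k. ennreal (\<bar>a (sigma_a a k)\<bar> powr p * w k))" .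
  qed
qed

lemma eq_pw:
  fixes a w :: "nat \<Rightarrow> real"
  assumes a0: "a \<longlonglongrightarrow> 0" and wdec: "antimono w" and wnn: "\<And>i. 0 \<le> w i" and p0: "0 \<le> p"
  shows "pw_pow p w a = (\<Sum>k. ennreal (\<bar>a (sigma_a a k)\<bar> powr p * w k))"
  using ub_pw[OF assms] lb_pw[OF sigma_inj[OF a0]] by (rule antisym)


section \<open>Basic properties of pw_pow\<close>

lemma powr_sum_ineq:
  fixes u v p :: real
  assumes "0 \<le> p"
  shows "\<bar>u + v\<bar> powr p \<le> 2 powr p * (\<bar>u\<bar> powr p + \<bar>v\<bar> powr p)"
proof -
  define m where "m = max \<bar>u\<bar> \<bar>v\<bar>"
  have "\<bar>u + v\<bar> \<le> 2 * m" unfolding m_def by linarith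
  hence "\<bar>u + v\<bar> powr p \<le> (2 * m) powr p" using assms by (intro powr_mono2) auto
  also have "\<dots> = 2 powr p * m powr p" using powr_mult[of 2 m p] by (simp add: m_def)
  also have "m powr p \<le> \<bar>u\<bar> powr p + \<bar>v\<bar> powr p" unfolding m_def by (auto simp: max_def)
  hence "2 powr p * m powr p \<le> 2 powr p * (\<bar>u\<bar> powr p + \<bar>v\<bar> powr p)" by (intro mult_left_mono) auto
  finally show ?thesis .
qed

lemma pw_mono:
  fixes x y w :: "nat \<Rightarrow> real"
  assumes le: "\<And>j. \<bar>x j\<bar> \<le> \<bar>y j\<bar>" and wnn: "\<And>i. 0 \<le> w i" and p0: "0 \<le> p"
  shows "pw_pow p w x \<le> pw_pow p w y"
  unfolding pw_pow_def
proof (rule SUP_mono)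
  fix \<sigma> :: "nat \<Rightarrow> nat" assume "\<sigma> \<in> {\<sigma>. bij \<sigma>}"
  have "(\<Sum>i. ennreal (\<bar>x (\<sigma> i)\<bar> powr p * w i)) \<le> (\<Sum>i. ennreal (\<bar>y (\<sigma> i)\<bar> powr p * w i))"
    using le wnn p0 by (intro suminf_le ennreal_leI mult_right_mono powr_mono2) auto
  then show "\<exists>m\<in>{\<sigma>. bij \<sigma>}. (\<Sum>i. ennreal (\<bar>x (\<sigma> i)\<bar> powr p * w i)) \<le> (\<Sum>i. ennreal (\<bar>y (m i)\<bar> powr p * w i))"
    using \<open>\<sigma> \<in> _\<close> by blast
qed

lemma pw_qt:
  fixes x y z w :: "nat \<Rightarrow> real"
  assumes eq: "\<And>j. z j = x j + y j" and wnn: "\<And>i. 0 \<le> w i" and p0: "0 \<le> p"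
  shows "pw_pow p w z \<le> ennreal (2 powr p) * (pw_pow p w x + pw_pow p w y)"
  unfolding pw_pow_def[of p w z]
proof (rule SUP_least)
  fix \<sigma> :: "nat \<Rightarrow> nat" assume s: "\<sigma> \<in> {\<sigma>. bij \<sigma>}"
  have "(\<Sum>i. ennreal (\<bar>z (\<sigma> i)\<bar> powr p * w i))
      \<le> (\<Sum>i. ennreal (2 powr p) * (ennreal (\<bar>x (\<sigma> i)\<bar> powr p * w i) + ennreal (\<bar>y (\<sigma> i)\<bar> powr p * w i)))"
  proof (rule suminf_le)
    fix i
    have "\<bar>z (\<sigma> i)\<bar> powr p * w i \<le> (2 powr p * (\<bar>x (\<sigma> i)\<bar> powr p + \<bar>y (\<sigma> i)\<bar> powr p)) * w i"
      unfolding eq using powr_sum_ineq[OF p0] wnn by (intro mult_right_mono) auto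
    also have "\<dots> = 2 powr p * (\<bar>x (\<sigma> i)\<bar> powr p * w i + \<bar>y (\<sigma> i)\<bar> powr p * w i)" by (simp add: algebra_simps)
    finally have "ennreal (\<bar>z (\<sigma> i)\<bar> powr p * w i) \<le> ennreal (2 powr p * (\<bar>x (\<sigma> i)\<bar> powr p * w i + \<bar>y (\<sigma> i)\<bar> powr p * w i))"
      by (rule ennreal_leI)
    also have "\<dots> = ennreal (2 powr p) * (ennreal (\<bar>x (\<sigma> i)\<bar> powr p * w i) + ennreal (\<bar>y (\<sigma> i)\<bar> powr p * w i))"
      using wnn by (simp add: ennreal_mult ennreal_plus)
    finally show "ennreal (\<bar>z (\<sigma> i)\<bar> powr p * w i) \<le> \<dots>" .
  qed auto
  also have "\<dots> = ennreal (2 powr p) * ((\<Sum>i. ennreal (\<bar>x (\<sigma> i)\<bar> powr p * w i)) + (\<Sum>i. ennreal (\<bar>y (\<sigma> i)\<bar> powr p * w i)))"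
    by (simp add: suminf_add)
  also have "\<dots> \<le> ennreal (2 powr p) * (pw_pow p w x + pw_pow p w y)"
    unfolding pw_pow_def using s by (intro mult_left_mono add_mono SUP_upper) auto
  finally show "(\<Sum>i. ennreal (\<bar>z (\<sigma> i)\<bar> powr p * w i)) \<le> ennreal (2 powr p) * (pw_pow p w x + pw_pow p w y)" .
qed

lemma Lpw_c0:
  fixes a w :: "nat \<Rightarrow> real"
  assumes ws: "weight_seq w" and p0: "0 \<le> p" and aL: "a \<in> Lpw p w"
  shows "a \<longlonglongrightarrow> 0"
proof (rule ccontr)
  assume na: "\<not> a \<longlonglongrightarrow> 0"
  have "\<exists>\<delta>>0. infinite {j. \<delta> \<le> \<bar>a j\<bar>}"
  proof (rule ccontr)
    assume "\<not> ?thesis"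
    hence fin: "\<And>\<delta>. \<delta> > 0 \<Longrightarrow> finite {j. \<delta> \<le> \<bar>a j\<bar>}" by blast
    have "a \<longlonglongrightarrow> 0"
      unfolding tendsto_iff
    proof (intro allI impI)
      fix e :: real assume e: "e > 0"
      have "\<exists>m. \<forall>n\<in>{j. e \<le> \<bar>a j\<bar>}. n < m" using fin[OF e] by (simp only: finite_nat_set_iff_bounded)
      then obtain m where m0: "\<forall>n\<in>{j. e \<le> \<bar>a j\<bar>}. n < m" by (erule exE)
      have m: "\<And>n. n \<in> {j. e \<le> \<bar>a j\<bar>} \<Longrightarrow> n < m" using m0 by blast
      have "\<bar>a n\<bar> < e" if "n \<ge> m" for n
      proof (rule ccontr)
        assume "\<not> \<bar>a n\<bar> < e"
        hence "n < m" using m[of n] by simp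
        then show False using that by simp
      qed
      then show "\<forall>\<^sub>F n in sequentially. dist (a n) 0 < e"
        unfolding eventually_sequentially by (auto simp: dist_real_def)
    qed
    then show False using na by simp
  qed
  then obtain \<delta> where d: "\<delta> > 0" "infinite {j. \<delta> \<le> \<bar>a j\<bar>}" by blast
  define S where "S = {j. \<delta> \<le> \<bar>a j\<bar>}"
  define g where "g = enumerate S"
  have bg: "bij_betw g UNIV S" unfolding g_def by (rule bij_enumerate) (use d in \<open>simp add: S_def\<close>)
  hence injg: "inj g" and gS: "\<And>i. g i \<in> S" by (auto simp: bij_betw_def)
  have wnn: "\<And>i. 0 \<le> w i" using ws by (auto simp: weight_seq_def less_imp_le)
  have "(\<Sum>i. ennreal (\<delta> powr p * w i)) \<le> (\<Sum>i. ennreal (\<bar>a (g i)\<bar> powr p * w i))"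
    using gS d wnn p0 by (intro suminf_le ennreal_leI mult_right_mono powr_mono2) (auto simp: S_def)
  also have "\<dots> \<le> pw_pow p w a" by (rule lb_pw[OF injg])
  also have "\<dots> < top" using aL by (simp add: Lpw_def)
  finally have "(\<Sum>i. ennreal (\<delta> powr p * w i)) \<noteq> top" by simp
  hence "summable (\<lambda>i. \<delta> powr p * w i)" using wnn by (intro summable_suminf_not_top) auto
  hence "summable w" using d by (simp add: summable_cmult_iff)
  then show False using ws by (simp add: weight_seq_def)
qed


section \<open>Tails\<close>

definition Qt :: "real \<Rightarrow> (nat \<Rightarrow> real) \<Rightarrow> nat \<Rightarrow> (nat \<Rightarrow> real) \<Rightarrow> ennreal" where
  "Qt p w N a = (\<Sum>k. ennreal (if N < sigma_a a k then \<bar>a (sigma_a a k)\<bar> powr p * w k else 0))"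

lemma Q_reindex:
  fixes a w :: "nat \<Rightarrow> real"
  assumes a0: "a \<longlonglongrightarrow> 0"
  shows "(\<Sum>j. ennreal (\<bar>a (j + Suc i)\<bar> powr p * w_inv w a (j + Suc i))) = Qt p w i a"
proof -
  define F where "F y = ennreal (\<bar>a y\<bar> powr p * w_inv w a y)" for y
  define G where "G y = F y * indicator {Suc i..} y" for y
  define s where "s = sigma_a a"
  have injs: "inj s" unfolding s_def by (rule sigma_inj[OF a0])
  have bsh: "bij_betw (\<lambda>j. j + Suc i) UNIV {Suc i..}"
    unfolding bij_betw_def
  proof
    show "inj (\<lambda>j. j + Suc i)" by (auto simp: inj_on_def)
    show "(\<lambda>j. j + Suc i) ` UNIV = {Suc i..}"
    proof
      show "(\<lambda>j. j + Suc i) ` UNIV \<subseteq> {Suc i..}" by auto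
      show "{Suc i..} \<subseteq> (\<lambda>j. j + Suc i) ` UNIV"
      proof
        fix y assume "y \<in> {Suc i..}"
        then have "y = (y - Suc i) + Suc i" by simp
        then show "y \<in> (\<lambda>j. j + Suc i) ` UNIV" by blast
      qed
    qed
  qed
  have "(\<Sum>j. ennreal (\<bar>a (j + Suc i)\<bar> powr p * w_inv w a (j + Suc i))) = (\<Sum>j. F (j + Suc i))"
    by (simp add: F_def)
  also have "\<dots> = (\<integral>\<^sup>+j. F (j + Suc i) \<partial>count_space UNIV)"
    by (rule nn_integral_count_space_nat[symmetric])
  also have "\<dots> = (\<integral>\<^sup>+y. F y \<partial>count_space {Suc i..})"
    by (rule nn_integral_bij_count_space[OF bsh])
  also have "\<dots> = (\<integral>\<^sup>+y. G y \<partial>count_space UNIV)"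
    by (simp add: nn_integral_count_space_indicator G_def)
  finally have L: "(\<Sum>j. ennreal (\<bar>a (j + Suc i)\<bar> powr p * w_inv w a (j + Suc i))) = (\<integral>\<^sup>+y. G y \<partial>count_space UNIV)" .
  have winv: "w_inv w a (s k) = w k" for k
  proof -
    have "(THE i'. sigma_a a i' = s k) = k"
      using injs by (intro the_equality) (auto simp: s_def inj_on_def)
    then show ?thesis by (simp add: w_inv_def s_def)
  qed
  have Gs: "G (s k) = ennreal (if i < s k then \<bar>a (s k)\<bar> powr p * w k else 0)" for k
    by (simp add: G_def F_def winv indicator_def Suc_le_eq)
  have bs: "bij_betw s UNIV (range s)" using injs by (simp add: bij_betw_def)
  have G0: "y \<notin> range s \<Longrightarrow> G y = 0" for y
    by (simp add: G_def F_def w_inv_def s_def)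
  have "Qt p w i a = (\<Sum>k. G (s k))" unfolding Qt_def using Gs[unfolded s_def] by (simp add: s_def)
  also have "\<dots> = (\<integral>\<^sup>+k. G (s k) \<partial>count_space UNIV)"
    by (rule nn_integral_count_space_nat[symmetric])
  also have "\<dots> = (\<integral>\<^sup>+y. G y \<partial>count_space (range s))"
    by (rule nn_integral_bij_count_space[OF bs])
  also have "\<dots> = (\<integral>\<^sup>+y. G y * indicator (range s) y \<partial>count_space UNIV)"
    by (simp add: nn_integral_count_space_indicator)
  also have "\<dots> = (\<integral>\<^sup>+y. G y \<partial>count_space UNIV)"
    by (rule nn_integral_cong) (auto simp: indicator_def G0)
  finally show ?thesis using L by simp
qed

lemma key_tail:
  fixes a w :: "nat \<Rightarrow> real"
  assumes a0: "a \<longlonglongrightarrow> 0" and wdec: "antimono w" and wnn: "\<And>i. 0 \<le> w i" and p0: "0 \<le> p"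
    and NM: "N \<le> M" and tau: "\<And>j. M < j \<Longrightarrow> \<bar>a j\<bar> powr p \<le> \<tau>" and t0: "0 \<le> \<tau>"
  shows "pw_pow p w (\<lambda>j. if M < j then a j else 0) \<le> Qt p w N a + ennreal (\<tau> * (\<Sum>k<Suc N. w k))"
  unfolding pw_pow_def
proof (rule SUP_least)
  fix \<sigma> :: "nat \<Rightarrow> nat" assume "\<sigma> \<in> {\<sigma>. bij \<sigma>}"
  hence inj: "inj \<sigma>" by (simp add: bij_is_inj)
  define b where "b j = (if M < j then a j else 0)" for j
  define D where "D = Suc N"
  define x where "x i = \<bar>b (\<sigma> i)\<bar> powr p" for i
  define WD where "WD = (\<Sum>k<D. w k)"
  have x0: "0 \<le> x i" for i by (simp add: x_def)
  have xt: "x i \<le> \<tau>" for i using tau t0 by (auto simp: x_def b_def)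
  have xf: "x i \<le> (if \<sigma> i \<in> {..N} then 0 else \<bar>a (\<sigma> i)\<bar> powr p)" for i
    using NM by (auto simp: x_def b_def)
  show "(\<Sum>i. ennreal (\<bar>(\<lambda>j. if M < j then a j else 0) (\<sigma> i)\<bar> powr p * w i)) \<le> Qt p w N a + ennreal (\<tau> * (\<Sum>k<Suc N. w k))"
    unfolding suminf_eq_SUP
  proof (rule SUP_least)
    fix K
    have r1: "(\<Sum>i<K. x i * w i) \<le> (\<Sum>i<K. x i * w (i + D)) + \<tau> * WD"
    proof -
      have wd: "w (i + D) \<le> w i" for i using wdec by (simp add: antimono_def)
      have "(\<Sum>i<K. x i * w i) - (\<Sum>i<K. x i * w (i + D)) = (\<Sum>i<K. x i * (w i - w (i + D)))"
        by (simp add: sum_subtractf algebra_simps)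
      also have "\<dots> \<le> (\<Sum>i<K. \<tau> * (w i - w (i + D)))"
        using xt wd x0 by (intro sum_mono mult_right_mono) auto
      also have "\<dots> = \<tau> * ((\<Sum>i<K. w i) - (\<Sum>i<K. w (i + D)))"
        by (simp add: sum_distrib_left sum_subtractf algebra_simps)
      also have "(\<Sum>i<K. w i) - (\<Sum>i<K. w (i + D)) \<le> WD"
      proof -
        have "(\<Sum>k<K+D. w k) = WD + (\<Sum>i<K. w (i + D))" unfolding WD_def by (rule sum_split_shift)
        moreover have "(\<Sum>k<K. w k) \<le> (\<Sum>k<K+D. w k)" using wnn by (intro sum_mono2) auto
        ultimately show ?thesis by simp
      qed
      hence "\<tau> * ((\<Sum>i<K. w i) - (\<Sum>i<K. w (i + D))) \<le> \<tau> * WD" using t0 by (rule mult_left_mono)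
      finally show ?thesis by simp
    qed
    have r2: "(\<Sum>i<K. x i * w (i + D)) \<le> (\<Sum>k<K+D. (if sigma_a a k \<in> {..N} then 0 else \<bar>a (sigma_a a k)\<bar> powr p) * w k)"
    proof -
      have "(\<Sum>i<K. x i * w (i + D)) \<le> (\<Sum>i<K. (if \<sigma> i \<in> {..N} then 0 else \<bar>a (\<sigma> i)\<bar> powr p) * w (i + D))"
        using xf wnn by (intro sum_mono mult_right_mono) auto
      also have "\<dots> \<le> (\<Sum>k<K+D. (if sigma_a a k \<in> {..N} then 0 else \<bar>a (sigma_a a k)\<bar> powr p) * w k)"
        by (rule gen_bound[OF a0 _ _ inj wdec wnn p0]) (auto simp: D_def)
      finally show ?thesis .
    qed
    have r3: "(\<Sum>k<K+D. (if sigma_a a k \<in> {..N} then 0 else \<bar>a (sigma_a a k)\<bar> powr p) * w k) =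
       (\<Sum>k<K+D. (if N < sigma_a a k then \<bar>a (sigma_a a k)\<bar> powr p * w k else 0))"
      by (rule sum.cong) (auto simp: not_le)
    have nnq: "0 \<le> (if N < sigma_a a k then \<bar>a (sigma_a a k)\<bar> powr p * w k else 0)" for k
      using wnn by simp
    have "(\<Sum>i<K. ennreal (\<bar>b (\<sigma> i)\<bar> powr p * w i)) = ennreal (\<Sum>i<K. x i * w i)"
      using wnn by (subst sum_ennreal) (auto simp: x_def)
    also have "\<dots> \<le> ennreal ((\<Sum>k<K+D. (if N < sigma_a a k then \<bar>a (sigma_a a k)\<bar> powr p * w k else 0)) + \<tau> * WD)"
      using r1 r2 r3 by (intro ennreal_leI) linarith
    also have "\<dots> = ennreal (\<Sum>k<K+D. (if N < sigma_a a k then \<bar>a (sigma_a a k)\<bar> powr p * w k else 0)) + ennreal (\<tau> * WD)"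
      using t0 wnn nnq by (intro ennreal_plus sum_nonneg mult_nonneg_nonneg) (auto simp: WD_def intro: sum_nonneg)
    also have "ennreal (\<Sum>k<K+D. (if N < sigma_a a k then \<bar>a (sigma_a a k)\<bar> powr p * w k else 0))
        = (\<Sum>k<K+D. ennreal (if N < sigma_a a k then \<bar>a (sigma_a a k)\<bar> powr p * w k else 0))"
      using nnq by (intro sum_ennreal[symmetric]) auto
    also have "\<dots> \<le> Qt p w N a"
      unfolding Qt_def suminf_eq_SUP by (rule SUP_upper) simp
    finally show "(\<Sum>i<K. ennreal (\<bar>(\<lambda>j. if M < j then a j else 0) (\<sigma> i)\<bar> powr p * w i)) \<le> Qt p w N a + ennreal (\<tau> * (\<Sum>k<Suc N. w k))"
      by (simp add: b_def WD_def D_def add_right_mono)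
  qed
qed


lemma weight_facts:
  assumes "weight_seq w"
  shows "antimono w" "\<And>i. 0 \<le> w i" "\<And>i. 0 < w i" "w 0 = 1" "\<And>i. w i \<le> 1" "\<not> summable w"
proof -
  show am: "antimono w" and "\<And>i. 0 < w i" "w 0 = 1" "\<not> summable w" using assms by (auto simp: weight_seq_def)
  then show "\<And>i. 0 \<le> w i" by (simp add: less_imp_le)
  show "\<And>i. w i \<le> 1" using am \<open>w 0 = 1\<close> by (metis antimonoD le0)
qed

lemma W_unbounded:
  assumes "weight_seq w"
  shows "\<exists>r. X < (\<Sum>k<r. w k)"
proof (rule ccontr)
  assume "\<not> ?thesis"
  hence "\<And>n. (\<Sum>k<n. w k) \<le> X" by (simp add: not_less)
  hence "summable w" using weight_facts(2)[OF assms] by (intro summableI_nonneg_bounded) auto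
  then show False using weight_facts(6)[OF assms] by simp
qed

lemma Qt_to_zero:
  fixes c w :: "nat \<Rightarrow> real"
  assumes ws: "weight_seq w" and p0: "0 \<le> p" and cL: "c \<in> Lpw p w" and e: "0 < \<epsilon>"
  shows "\<exists>N. Qt p w N c < ennreal \<epsilon>"
proof -
  have c0: "c \<longlonglongrightarrow> 0" by (rule Lpw_c0[OF ws p0 cL])
  note wf = weight_facts[OF ws]
  define s where "s = sigma_a c"
  define h where "h k = \<bar>c (s k)\<bar> powr p * w k" for k
  have h0: "0 \<le> h k" for k using wf by (simp add: h_def)
  have "(\<Sum>k. ennreal (h k)) = pw_pow p w c"
    unfolding h_def s_def by (rule eq_pw[OF c0 wf(1) wf(2) p0, symmetric])
  also have "\<dots> < top" using cL by (simp add: Lpw_def)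
  finally have sh: "summable h" using h0 by (intro summable_suminf_not_top) auto
  obtain K where K: "norm (\<Sum>i. h (i + K)) < \<epsilon>" using suminf_exist_split[OF e sh] by blast
  define N where "N = (\<Sum>k<K. s k)"
  have sN: "k < K \<Longrightarrow> s k \<le> N" for k unfolding N_def by (rule member_le_sum) auto
  define q where "q k = (if N < s k then h k else 0)" for k
  have q0: "0 \<le> q k" for k using h0 by (simp add: q_def)
  have qh: "q k \<le> h k" for k using h0 by (simp add: q_def)
  have sq: "summable q"
  proof (rule summable_comparison_test'[OF sh])
    fix n show "norm (q n) \<le> h n" using q0[of n] qh[of n] by simp
  qed
  have qK: "k < K \<Longrightarrow> q k = 0" for k using sN[of k] by (simp add: q_def)
  have "Qt p w N c = (\<Sum>k. ennreal (q k))" unfolding Qt_def q_def h_def s_def by (rule refl)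
  also have "\<dots> = ennreal (\<Sum>k. q k)" using q0 sq by (rule suminf_ennreal2)
  finally have Qe: "Qt p w N c = ennreal (\<Sum>k. q k)" .
  have "(\<Sum>k. q k) = (\<Sum>k. q (k + K))"
    using suminf_offset[of q K] sq qK by (simp add: summable_iff_shift)
  also have "\<dots> \<le> (\<Sum>k. h (k + K))"
    using qh sq sh by (intro suminf_le) (auto simp: summable_iff_shift)
  also have "\<dots> < \<epsilon>" using K by simp
  finally have "(\<Sum>k. q k) < \<epsilon>" .
  then have "Qt p w N c < ennreal \<epsilon>" unfolding Qe using e by (simp add: ennreal_lessI)
  then show ?thesis by blast
qed


lemma small_from_c0:
  fixes c :: "nat \<Rightarrow> real"
  assumes c0: "c \<longlonglongrightarrow> 0" and t: "0 < \<tau>" and p: "0 < p"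
  shows "\<exists>M0. \<forall>j\<ge>M0. \<bar>c j\<bar> powr p \<le> \<tau>"
proof -
  have "0 < \<tau> powr (1/p)" using t by simp
  then have "\<forall>\<^sub>F n in sequentially. dist (c n) 0 < \<tau> powr (1/p)" using c0 unfolding tendsto_iff by blast
  then obtain M0 where M0: "\<And>n. n \<ge> M0 \<Longrightarrow> \<bar>c n\<bar> < \<tau> powr (1/p)"
    by (auto simp: eventually_sequentially dist_real_def)
  have "\<bar>c j\<bar> powr p \<le> \<tau>" if "j \<ge> M0" for j
  proof -
    have "\<bar>c j\<bar> powr p \<le> (\<tau> powr (1/p)) powr p"
      using M0[OF that] p by (intro powr_mono2) auto
    also have "\<dots> = \<tau>" using p t by (simp add: powr_powr)
    finally show ?thesis .
  qed
  then show ?thesis by blast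
qed

lemma tail_small_Lpw:
  fixes c w :: "nat \<Rightarrow> real"
  assumes ws: "weight_seq w" and p: "0 < p" and cL: "c \<in> Lpw p w" and e: "0 < \<epsilon>"
  shows "\<exists>M. \<forall>i\<ge>M. pw_pow p w (\<lambda>j. if i < j then c j else 0) < ennreal \<epsilon>"
proof -
  note wf = weight_facts[OF ws]
  have c0: "c \<longlonglongrightarrow> 0" using Lpw_c0[OF ws _ cL] p by simp
  obtain N where N: "Qt p w N c < ennreal (\<epsilon>/2)" using Qt_to_zero[OF ws _ cL, of "\<epsilon>/2"] p e by auto
  define WD where "WD = (\<Sum>k<Suc N. w k)"
  have WD: "0 < WD" unfolding WD_def using wf(3) by (intro sum_pos) auto
  define \<tau> where "\<tau> = \<epsilon> / (4 * WD)"
  have t: "0 < \<tau>" using e WD by (simp add: \<tau>_def)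
  obtain M0 where M0: "\<And>j. j \<ge> M0 \<Longrightarrow> \<bar>c j\<bar> powr p \<le> \<tau>" using small_from_c0[OF c0 t p] by blast
  define M where "M = max N M0"
  have "pw_pow p w (\<lambda>j. if M < j then c j else 0) \<le> Qt p w N c + ennreal (\<tau> * WD)"
    unfolding WD_def by (rule key_tail[OF c0 wf(1) wf(2)]) (use p t M0 in \<open>auto simp: M_def\<close>)
  also have "\<tau> * WD = \<epsilon> / 4" using WD by (simp add: \<tau>_def)
  also have "Qt p w N c + ennreal (\<epsilon> / 4) < ennreal (\<epsilon>/2) + ennreal (\<epsilon>/4)"
    using N by (simp add: ennreal_add_left_cancel_less ennreal_less_top)
  also have "\<dots> = ennreal (\<epsilon>/2 + \<epsilon>/4)" using e by (subst ennreal_plus) auto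
  also have "\<dots> \<le> ennreal \<epsilon>" using e by (intro ennreal_leI) simp
  finally have M: "pw_pow p w (\<lambda>j. if M < j then c j else 0) < ennreal \<epsilon>" .
  have "pw_pow p w (\<lambda>j. if i < j then c j else 0) < ennreal \<epsilon>" if "i \<ge> M" for i
  proof -
    have "pw_pow p w (\<lambda>j. if i < j then c j else 0) \<le> pw_pow p w (\<lambda>j. if M < j then c j else 0)"
      using that wf(2) p by (intro pw_mono) auto
    then show ?thesis using M by simp
  qed
  then show ?thesis by blast
qed

lemma norm_le_imp:
  assumes fin: "pw_pow p w a < top" and p: "0 < p" and n: "normpw p w a \<le> \<eta>"
  shows "pw_pow p w a \<le> ennreal (\<eta> powr p)"
proof -
  define x where "x = enn2real (pw_pow p w a)"
  have x0: "0 \<le> x" by (simp add: x_def)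
  have "x = (x powr (1/p)) powr p" using x0 p by (simp add: powr_powr)
  also have "\<dots> \<le> \<eta> powr p"
    using n p x0 by (intro powr_mono2) (auto simp: normpw_def x_def)
  finally have "x \<le> \<eta> powr p" .
  moreover have "pw_pow p w a = ennreal x" using fin by (simp add: x_def)
  ultimately show ?thesis by (simp add: ennreal_leI)
qed

lemma le_imp_norm:
  assumes le: "pw_pow p w a \<le> ennreal t" and t: "0 \<le> t" and p: "0 < p"
  shows "normpw p w a \<le> t powr (1/p)"
proof -
  have "enn2real (pw_pow p w a) \<le> t" using le t by (intro enn2real_leI)
  then show ?thesis unfolding normpw_def using p by (intro powr_mono2) auto
qed

lemma entry_bound:
  fixes a w :: "nat \<Rightarrow> real"
  assumes ws: "weight_seq w"
  shows "ennreal (\<bar>a j\<bar> powr p) \<le> pw_pow p w a"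
proof -
  define g where "g i = (if i = 0 then j else if i = j then 0 else i)" for i :: nat
  have "inj g" by (auto simp: inj_on_def g_def split: if_splits)
  have "ennreal (\<bar>a j\<bar> powr p) = (\<Sum>i<1. ennreal (\<bar>a (g i)\<bar> powr p * w i))"
    using weight_facts(4)[OF ws] by (simp add: g_def)
  also have "\<dots> \<le> (\<Sum>i. ennreal (\<bar>a (g i)\<bar> powr p * w i))"
    unfolding suminf_eq_SUP by (rule SUP_upper) simp
  also have "\<dots> \<le> pw_pow p w a" by (rule lb_pw[OF \<open>inj g\<close>])
  finally show ?thesis .
qed

lemma fin_support_bound:
  fixes c w :: "nat \<Rightarrow> real"
  assumes ws: "weight_seq w" and p: "0 \<le> p" and supp: "\<And>j. M < j \<Longrightarrow> c j = 0"
  shows "pw_pow p w c \<le> ennreal (\<Sum>j\<le>M. \<bar>c j\<bar> powr p)"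
  unfolding pw_pow_def
proof (rule SUP_least)
  note wf = weight_facts[OF ws]
  fix \<sigma> :: "nat \<Rightarrow> nat" assume "\<sigma> \<in> {\<sigma>. bij \<sigma>}"
  hence inj: "inj \<sigma>" by (simp add: bij_is_inj)
  show "(\<Sum>i. ennreal (\<bar>c (\<sigma> i)\<bar> powr p * w i)) \<le> ennreal (\<Sum>j\<le>M. \<bar>c j\<bar> powr p)"
    unfolding suminf_eq_SUP
  proof (rule SUP_least)
    fix K
    have "(\<Sum>i<K. ennreal (\<bar>c (\<sigma> i)\<bar> powr p * w i)) = ennreal (\<Sum>i<K. \<bar>c (\<sigma> i)\<bar> powr p * w i)"
      using wf(2) by (intro sum_ennreal) auto
    also have "(\<Sum>i<K. \<bar>c (\<sigma> i)\<bar> powr p * w i) \<le> (\<Sum>i<K. \<bar>c (\<sigma> i)\<bar> powr p)"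
      using wf(5) by (intro sum_mono) (simp add: mult_left_le)
    also have "\<dots> = (\<Sum>j\<in>\<sigma> ` {..<K}. \<bar>c j\<bar> powr p)"
      using inj by (simp add: sum.reindex inj_on_subset)
    also have "\<dots> = (\<Sum>j\<in>\<sigma> ` {..<K} \<inter> {..M}. \<bar>c j\<bar> powr p)"
      by (rule sum.mono_neutral_right) (auto simp: supp not_le)
    also have "\<dots> \<le> (\<Sum>j\<le>M. \<bar>c j\<bar> powr p)"
      by (rule sum_mono2) auto
    finally show "(\<Sum>i<K. ennreal (\<bar>c (\<sigma> i)\<bar> powr p * w i)) \<le> ennreal (\<Sum>j\<le>M. \<bar>c j\<bar> powr p)"
      by (simp add: ennreal_leI)
  qed
qed


lemma term_le_suminf: "(f r :: ennreal) \<le> suminf f"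
proof -
  have "f r \<le> (\<Sum>i<Suc r. f i)" by (rule member_le_sum) auto
  also have "\<dots> \<le> suminf f" unfolding suminf_eq_SUP by (rule SUP_upper) simp
  finally show ?thesis .
qed

lemma unif_small:
  fixes w :: "nat \<Rightarrow> real"
  assumes ws: "weight_seq w" and p: "0 < p" and AL: "A \<subseteq> Lpw p w"
    and B: "\<And>a. a \<in> A \<Longrightarrow> pw_pow p w a \<le> ennreal Bp" and B0: "0 \<le> Bp"
    and T: "\<And>\<epsilon>. \<epsilon> > 0 \<Longrightarrow> \<exists>N. \<forall>a\<in>A. Qt p w N a < ennreal \<epsilon>"
    and th: "0 < \<theta>"
  shows "\<exists>M0. \<forall>a\<in>A. \<forall>j>M0. \<bar>a j\<bar> powr p \<le> \<theta>"
proof -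
  note wf = weight_facts[OF ws]
  obtain r0 where r0: "Bp / \<theta> < (\<Sum>k<r0. w k)" using W_unbounded[OF ws] by blast
  have r0': "Bp < \<theta> * (\<Sum>k<r0. w k)" using r0 th by (simp add: field_simps)
  define \<epsilon> where "\<epsilon> = \<theta> * w r0"
  have e: "0 < \<epsilon>" using th wf(3) by (simp add: \<epsilon>_def)
  obtain N0 where N0: "\<And>a. a \<in> A \<Longrightarrow> Qt p w N0 a < ennreal \<epsilon>" using T[OF e] by blast
  have "\<bar>a j\<bar> powr p \<le> \<theta>" if aA: "a \<in> A" and j: "N0 < j" for a j
  proof (rule ccontr)
    assume "\<not> \<bar>a j\<bar> powr p \<le> \<theta>"
    hence big: "\<theta> < \<bar>a j\<bar> powr p" by simp
    have a0: "a \<longlonglongrightarrow> 0" using Lpw_c0[OF ws, of p a] AL aA p by auto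
    have "a j \<noteq> 0" using big th by auto
    then obtain r where r: "j = sigma_a a r" using sigma_nonzero[OF a0] by blast
    show False
    proof (cases "r < r0")
      case True
      have "\<epsilon> < \<bar>a j\<bar> powr p * w r0" unfolding \<epsilon>_def using big wf(3)[of r0] by (intro mult_strict_right_mono) auto
      also have "\<dots> \<le> \<bar>a j\<bar> powr p * w r"
        using True wf(1) by (intro mult_left_mono) (auto simp: antimono_def)
      finally have "ennreal \<epsilon> < ennreal (\<bar>a j\<bar> powr p * w r)" using e by (intro ennreal_lessI) auto
      also have "ennreal (\<bar>a j\<bar> powr p * w r) = ennreal (if N0 < sigma_a a r then \<bar>a (sigma_a a r)\<bar> powr p * w r else 0)"
        using j r by simp
      also have "\<dots> \<le> Qt p w N0 a" unfolding Qt_def by (rule term_le_suminf)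
      finally show False using N0[OF aA] by simp
    next
      case False
      have ge: "\<theta> * w k \<le> \<bar>a (sigma_a a k)\<bar> powr p * w k" if "k < r0" for k
      proof -
        have "\<bar>a j\<bar> \<le> \<bar>a (sigma_a a k)\<bar>" using sigma_decr[OF a0, of k r] that False r by simp
        hence "\<bar>a j\<bar> powr p \<le> \<bar>a (sigma_a a k)\<bar> powr p" using p by (intro powr_mono2) auto
        then show ?thesis using big wf(2)[of k] by (intro mult_right_mono) auto
      qed
      have "Bp < \<theta> * (\<Sum>k<r0. w k)" by (rule r0')
      also have "\<dots> \<le> (\<Sum>k<r0. \<bar>a (sigma_a a k)\<bar> powr p * w k)"
        unfolding sum_distrib_left using ge by (intro sum_mono) auto
      finally have lt: "ennreal Bp < ennreal (\<Sum>k<r0. \<bar>a (sigma_a a k)\<bar> powr p * w k)"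
        using B0 by (intro ennreal_lessI) auto
      have "ennreal (\<Sum>k<r0. \<bar>a (sigma_a a k)\<bar> powr p * w k) = (\<Sum>k<r0. ennreal (\<bar>a (sigma_a a k)\<bar> powr p * w k))"
        using wf(2) by (intro sum_ennreal[symmetric]) auto
      also have "\<dots> \<le> (\<Sum>k. ennreal (\<bar>a (sigma_a a k)\<bar> powr p * w k))"
        unfolding suminf_eq_SUP by (rule SUP_upper) simp
      also have "\<dots> = pw_pow p w a" using eq_pw[OF a0 wf(1) wf(2)] p by simp
      also have "\<dots> \<le> ennreal Bp" by (rule B[OF aA])
      finally show False using lt by simp
    qed
  qed
  then show ?thesis by blast
qed


lemma enn_comb:
  fixes k x y :: real
  assumes "0 \<le> k" "0 \<le> x" "0 \<le> y"
  shows "ennreal k * (ennreal x + ennreal y) = ennreal (k * (x + y))"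
  using assms by (simp add: ennreal_mult ennreal_plus)

lemma qt_real:
  fixes x y z w :: "nat \<Rightarrow> real"
  assumes eq: "\<And>j. z j = x j + y j" and wnn: "\<And>i. 0 \<le> w i" and p0: "0 \<le> p"
    and bx: "pw_pow p w x \<le> ennreal u" and by': "pw_pow p w y \<le> ennreal v" and u: "0 \<le> u" and v: "0 \<le> v"
  shows "pw_pow p w z \<le> ennreal (2 powr p * (u + v))"
proof -
  have "pw_pow p w z \<le> ennreal (2 powr p) * (pw_pow p w x + pw_pow p w y)" by (rule pw_qt[OF eq wnn p0])
  also have "\<dots> \<le> ennreal (2 powr p) * (ennreal u + ennreal v)" using bx by' by (intro mult_left_mono add_mono) auto
  also have "\<dots> = ennreal (2 powr p * (u + v))" using u v by (intro enn_comb) auto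
  finally show ?thesis .
qed

lemma Qt_le_tail:
  fixes a w :: "nat \<Rightarrow> real"
  assumes a0: "a \<longlonglongrightarrow> 0"
  shows "Qt p w i a \<le> pw_pow p w (\<lambda>j. if i < j then a j else 0)"
proof -
  have "Qt p w i a = (\<Sum>k. ennreal (\<bar>(\<lambda>j. if i < j then a j else 0) (sigma_a a k)\<bar> powr p * w k))"
    unfolding Qt_def by (rule suminf_cong) simp
  also have "\<dots> \<le> pw_pow p w (\<lambda>j. if i < j then a j else 0)" by (rule lb_pw[OF sigma_inj[OF a0]])
  finally show ?thesis .
qed

lemma neg_pw: "0 \<le> p \<Longrightarrow> (\<And>i. 0 \<le> w i) \<Longrightarrow> pw_pow p w (\<lambda>j. - c j) \<le> pw_pow p w c"
  by (rule pw_mono) auto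

lemma diff_Lpw:
  assumes ws: "weight_seq w" and p0: "0 \<le> p" and aL: "a \<in> Lpw p w" and cL: "c \<in> Lpw p w"
  shows "a - c \<in> Lpw p w"
proof -
  note wf = weight_facts[OF ws]
  have "pw_pow p w (a - c) \<le> ennreal (2 powr p) * (pw_pow p w a + pw_pow p w (\<lambda>j. - c j))"
    by (rule pw_qt[OF _ wf(2) p0]) simp
  also have "\<dots> \<le> ennreal (2 powr p) * (pw_pow p w a + pw_pow p w c)"
    using neg_pw[OF p0 wf(2)] by (intro mult_left_mono add_mono) auto
  also have "\<dots> < top" using aL cL by (simp add: Lpw_def ennreal_mult_less_top)
  finally show ?thesis by (simp add: Lpw_def)
qed


theorem mainTheorem15:
  fixes p :: real and w :: "nat \<Rightarrow> real" and A :: "(nat \<Rightarrow> real) set"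
  assumes "1 \<le> p" and "weight_seq w" and "A \<subseteq> Lpw p w"
  shows "precompact_pw p w A \<longleftrightarrow>
    (bounded_pw p w A \<and>
     (\<forall>\<epsilon>>0. \<exists>N::nat. \<forall>a\<in>A. \<forall>i\<ge>N.
        (\<Sum>j. ennreal (\<bar>a (j + Suc i)\<bar> powr p * w_inv w a (j + Suc i))) < ennreal \<epsilon>))"
proof -
  have p: "0 < p" using assms(1) by simp
  hence p0: "0 \<le> p" by simp
  note ws = assms(2)
  note wf = weight_facts[OF ws]
  note AL = assms(3)
  have c0A: "a \<longlonglongrightarrow> 0" if "a \<in> A" for a using Lpw_c0[OF ws p0] AL that by blast
  have Qeq: "(\<Sum>j. ennreal (\<bar>a (j + Suc i)\<bar> powr p * w_inv w a (j + Suc i))) = Qt p w i a"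
    if "a \<in> A" for a i by (rule Q_reindex[OF c0A[OF that]])
  have fin: "pw_pow p w a < top" if "a \<in> Lpw p w" for a using that by (simp add: Lpw_def)
  show ?thesis
  proof
    assume pc: "precompact_pw p w A"
    have bnd: "bounded_pw p w A"
    proof -
      obtain F where F: "finite F" "F \<subseteq> Lpw p w"
        "A \<subseteq> (\<Union>c\<in>F. {b \<in> Lpw p w. normpw p w (b - c) \<le> 1})"
        using pc unfolding precompact_pw_def by (meson zero_less_one)
      define S where "S = (\<Sum>c\<in>F. enn2real (pw_pow p w c))"
      define Bp where "Bp = 2 powr p * (S + 1)"
      have S0: "0 \<le> S" unfolding S_def by (intro sum_nonneg) auto
      have "normpw p w a \<le> Bp powr (1/p)" if aA: "a \<in> A" for a
      proof -
        obtain c where c: "c \<in> F" "normpw p w (a - c) \<le> 1" using F(3) aA by blast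
        have aL: "a \<in> Lpw p w" using AL aA by blast
        have cL: "c \<in> Lpw p w" using F(2) c(1) by blast
        have "pw_pow p w (a - c) \<le> ennreal (1 powr p)"
          by (rule norm_le_imp[OF fin[OF diff_Lpw[OF ws p0 aL cL]] p c(2)])
        hence d1: "pw_pow p w (a - c) \<le> ennreal 1" by simp
        have "enn2real (pw_pow p w c) \<le> S" unfolding S_def using F(1) c(1) by (intro member_le_sum) auto
        hence "pw_pow p w c \<le> ennreal S" using fin[OF cL]
          by (metis ennreal_enn2real ennreal_leI less_imp_le top.not_eq_extremum)
        hence "pw_pow p w a \<le> ennreal (2 powr p * (S + 1))"
          by (intro qt_real[OF _ wf(2) p0 _ d1, of _ c]) (use S0 in auto)
        then show ?thesis unfolding Bp_def by (rule le_imp_norm) (use S0 p in auto)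
      qed
      then show ?thesis unfolding bounded_pw_def by blast
    qed
    have tl: "\<forall>\<epsilon>>0. \<exists>N::nat. \<forall>a\<in>A. \<forall>i\<ge>N.
        (\<Sum>j. ennreal (\<bar>a (j + Suc i)\<bar> powr p * w_inv w a (j + Suc i))) < ennreal \<epsilon>"
    proof (intro allI impI)
      fix \<epsilon> :: real assume e: "0 < \<epsilon>"
      define e1 where "e1 = \<epsilon> / (4 * 2 powr p)"
      have e1: "0 < e1" using e by (simp add: e1_def)
      define \<delta> where "\<delta> = e1 powr (1/p)"
      have d: "0 < \<delta>" using e1 by (simp add: \<delta>_def)
      have dp: "\<delta> powr p = e1" using e1 p by (simp add: \<delta>_def powr_powr)
      obtain F where F: "finite F" "F \<subseteq> Lpw p w"
        "A \<subseteq> (\<Union>c\<in>F. {b \<in> Lpw p w. normpw p w (b - c) \<le> \<delta>})"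
        using pc d unfolding precompact_pw_def by meson
      have "\<forall>c\<in>F. \<exists>M. \<forall>i\<ge>M. pw_pow p w (\<lambda>j. if i < j then c j else 0) < ennreal e1"
        using tail_small_Lpw[OF ws p _ e1] F(2) by blast
      then obtain Mc where Mc: "\<And>c i. c \<in> F \<Longrightarrow> i \<ge> Mc c \<Longrightarrow> pw_pow p w (\<lambda>j. if i < j then c j else 0) < ennreal e1"
        by metis
      define N where "N = (\<Sum>c\<in>F. Mc c)"
      have "\<forall>a\<in>A. \<forall>i\<ge>N. (\<Sum>j. ennreal (\<bar>a (j + Suc i)\<bar> powr p * w_inv w a (j + Suc i))) < ennreal \<epsilon>"
      proof (intro ballI allI impI)
        fix a i assume aA: "a \<in> A" and iN: "N \<le> i"
        obtain c where c: "c \<in> F" "normpw p w (a - c) \<le> \<delta>" using F(3) aA by blast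
        have aL: "a \<in> Lpw p w" using AL aA by blast
        have cL: "c \<in> Lpw p w" using F(2) c(1) by blast
        have "pw_pow p w (a - c) \<le> ennreal (\<delta> powr p)"
          by (rule norm_le_imp[OF fin[OF diff_Lpw[OF ws p0 aL cL]] p c(2)])
        hence dac: "pw_pow p w (a - c) \<le> ennreal e1" using dp by simp
        have "Mc c \<le> N" unfolding N_def using F(1) c(1) by (intro member_le_sum) auto
        hence ct: "pw_pow p w (\<lambda>j. if i < j then c j else 0) \<le> ennreal e1" using Mc[OF c(1)] iN
          by (meson le_trans less_imp_le)
        have dt: "pw_pow p w (\<lambda>j. if i < j then (a - c) j else 0) \<le> ennreal e1"
        proof -
          have "pw_pow p w (\<lambda>j. if i < j then (a - c) j else 0) \<le> pw_pow p w (a - c)"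
            by (rule pw_mono[OF _ wf(2) p0]) auto
          then show ?thesis using dac by (rule order_trans)
        qed
        have "(\<Sum>j. ennreal (\<bar>a (j + Suc i)\<bar> powr p * w_inv w a (j + Suc i))) = Qt p w i a" by (rule Qeq[OF aA])
        also have "\<dots> \<le> pw_pow p w (\<lambda>j. if i < j then a j else 0)" by (rule Qt_le_tail[OF c0A[OF aA]])
        also have "\<dots> \<le> ennreal (2 powr p * (e1 + e1))"
          by (rule qt_real[OF _ wf(2) p0 ct dt]) (use e1 in auto)
        also have "2 powr p * (e1 + e1) = \<epsilon> / 2" by (simp add: e1_def)
        also have "ennreal (\<epsilon> / 2) < ennreal \<epsilon>" using e by (intro ennreal_lessI) auto
        finally show "(\<Sum>j. ennreal (\<bar>a (j + Suc i)\<bar> powr p * w_inv w a (j + Suc i))) < ennreal \<epsilon>" .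
      qed
      then show "\<exists>N::nat. \<forall>a\<in>A. \<forall>i\<ge>N. (\<Sum>j. ennreal (\<bar>a (j + Suc i)\<bar> powr p * w_inv w a (j + Suc i))) < ennreal \<epsilon>"
        by blast
    qed
    show "bounded_pw p w A \<and> (\<forall>\<epsilon>>0. \<exists>N::nat. \<forall>a\<in>A. \<forall>i\<ge>N.
        (\<Sum>j. ennreal (\<bar>a (j + Suc i)\<bar> powr p * w_inv w a (j + Suc i))) < ennreal \<epsilon>)"
      using bnd tl by blast
  next
    assume rhs: "bounded_pw p w A \<and> (\<forall>\<epsilon>>0. \<exists>N::nat. \<forall>a\<in>A. \<forall>i\<ge>N.
        (\<Sum>j. ennreal (\<bar>a (j + Suc i)\<bar> powr p * w_inv w a (j + Suc i))) < ennreal \<epsilon>)"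
    then obtain Bn where Bn: "\<And>a. a \<in> A \<Longrightarrow> normpw p w a \<le> Bn" unfolding bounded_pw_def by blast
    define B1 where "B1 = max Bn 0"
    define Bp where "Bp = B1 powr p"
    have Bp0: "0 \<le> Bp" by (simp add: Bp_def)
    have B: "pw_pow p w a \<le> ennreal Bp" if aA: "a \<in> A" for a
      unfolding Bp_def using AL aA Bn[OF aA] by (intro norm_le_imp[OF fin p]) (auto simp: B1_def)
    have T: "\<exists>N. \<forall>a\<in>A. Qt p w N a < ennreal \<epsilon>" if e: "\<epsilon> > 0" for \<epsilon>
    proof -
      obtain N where N: "\<forall>a\<in>A. \<forall>i\<ge>N. (\<Sum>j. ennreal (\<bar>a (j + Suc i)\<bar> powr p * w_inv w a (j + Suc i))) < ennreal \<epsilon>"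
        using rhs e by blast
      have "\<forall>a\<in>A. Qt p w N a < ennreal \<epsilon>" using N Qeq by force
      then show ?thesis by blast
    qed
    show "precompact_pw p w A"
      unfolding precompact_pw_def
    proof (intro allI impI)
      fix \<eta> :: real assume eta: "0 < \<eta>"
      define e1 where "e1 = \<eta> powr p / (4 * 2 powr p)"
      have e1: "0 < e1" using eta by (simp add: e1_def)
      obtain N where N: "\<And>a. a \<in> A \<Longrightarrow> Qt p w N a < ennreal e1" using T[OF e1] by blast
      define WD where "WD = (\<Sum>k<Suc N. w k)"
      have WD: "0 < WD" unfolding WD_def using wf(3) by (intro sum_pos) auto
      define \<theta> where "\<theta> = e1 / WD"
      have th: "0 < \<theta>" using e1 WD by (simp add: \<theta>_def)
      obtain M0 where M0: "\<And>a j. a \<in> A \<Longrightarrow> M0 < j \<Longrightarrow> \<bar>a j\<bar> powr p \<le> \<theta>"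
        using unif_small[OF ws p AL B Bp0 T th] by blast
      define M where "M = max N M0"
      have tailM: "pw_pow p w (\<lambda>j. if M < j then a j else 0) \<le> ennreal (2 * e1)" if aA: "a \<in> A" for a
      proof -
        have "pw_pow p w (\<lambda>j. if M < j then a j else 0) \<le> Qt p w N a + ennreal (\<theta> * WD)"
          unfolding WD_def by (rule key_tail[OF c0A[OF aA] wf(1) wf(2) p0]) (use M0[OF aA] th in \<open>auto simp: M_def\<close>)
        also have "\<theta> * WD = e1" using WD by (simp add: \<theta>_def)
        also have "Qt p w N a + ennreal e1 \<le> ennreal e1 + ennreal e1" using N[OF aA] by (intro add_mono) auto
        also have "\<dots> = ennreal (2 * e1)" using e1 by (subst ennreal_plus[symmetric]) auto
        finally show ?thesis .
      qed
      define C where "C = Bp powr (1/p)"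
      have aC: "\<bar>a j\<bar> \<le> C" if aA: "a \<in> A" for a j
      proof -
        have "ennreal (\<bar>a j\<bar> powr p) \<le> ennreal Bp" using entry_bound[OF ws, of a j p] B[OF aA] by (rule order_trans)
        hence "\<bar>a j\<bar> powr p \<le> Bp" using Bp0 by simp
        hence "(\<bar>a j\<bar> powr p) powr (1/p) \<le> Bp powr (1/p)" using p by (intro powr_mono2) auto
        then show ?thesis using p by (simp add: C_def powr_powr)
      qed
      define \<delta> where "\<delta> = (e1 / real (Suc M)) powr (1/p)"
      have d: "0 < \<delta>" using e1 by (simp add: \<delta>_def)
      have dp: "\<delta> powr p = e1 / real (Suc M)" using e1 p by (simp add: \<delta>_def powr_powr)
      define K where "K = \<lceil>C / \<delta>\<rceil> + 1"
      define G where "G = {-K..K}"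
      define emb where "emb f j = (if j \<le> M then \<delta> * of_int (f j) else 0)" for f :: "nat \<Rightarrow> int" and j
      define F where "F = emb ` (PiE {..M} (\<lambda>_. G))"
      have finF: "finite F" unfolding F_def G_def by (intro finite_imageI finite_PiE) auto
      have FL: "F \<subseteq> Lpw p w"
      proof
        fix c assume "c \<in> F"
        then have supp: "\<And>j. M < j \<Longrightarrow> c j = 0" by (auto simp: F_def emb_def)
        have "pw_pow p w c \<le> ennreal (\<Sum>j\<le>M. \<bar>c j\<bar> powr p)" by (rule fin_support_bound[OF ws p0 supp])
        also have "\<dots> < top" by simp
        finally show "c \<in> Lpw p w" by (simp add: Lpw_def)
      qed
      have cover: "a \<in> (\<Union>c\<in>F. {b \<in> Lpw p w. normpw p w (b - c) \<le> \<eta>})" if aA: "a \<in> A" for a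
      proof -
        define f where "f = restrict (\<lambda>j. \<lfloor>a j / \<delta>\<rfloor>) {..M}"
        have fG: "f \<in> PiE {..M} (\<lambda>_. G)"
        proof -
          have "\<lfloor>a j / \<delta>\<rfloor> \<in> G" for j
          proof -
            have "\<bar>a j\<bar> \<le> C" by (rule aC[OF aA])
            hence "- C / \<delta> \<le> a j / \<delta>" "a j / \<delta> \<le> C / \<delta>" using d by (auto simp: divide_right_mono abs_le_iff field_simps)
            hence h1: "\<lfloor>- C / \<delta>\<rfloor> \<le> \<lfloor>a j / \<delta>\<rfloor>" by (intro floor_mono) simp
            have "of_int \<lfloor>a j / \<delta>\<rfloor> \<le> C / \<delta>" using of_int_floor_le[of "a j / \<delta>"] \<open>a j / \<delta> \<le> C / \<delta>\<close> by linarith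
            also have "\<dots> \<le> of_int \<lceil>C / \<delta>\<rceil>" by (rule le_of_int_ceiling)
            finally have h2: "\<lfloor>a j / \<delta>\<rfloor> \<le> \<lceil>C / \<delta>\<rceil>" by linarith
            note h1 h2
            moreover have "\<lfloor>- C / \<delta>\<rfloor> = - \<lceil>C / \<delta>\<rceil>" by (simp add: ceiling_def)
            ultimately show ?thesis by (simp add: G_def K_def)
          qed
          then show ?thesis by (auto simp: f_def)
        qed
        define c where "c = emb f"
        have cF: "c \<in> F" unfolding c_def F_def using fG by blast
        have cL: "c \<in> Lpw p w" using cF FL by blast
        define dd where "dd j = (if j \<le> M then a j - c j else 0)" for j
        have ddb: "\<bar>dd j\<bar> \<le> \<delta>" for j
        proof (cases "j \<le> M")
          case True
          have "c j = \<delta> * of_int \<lfloor>a j / \<delta>\<rfloor>" using True by (simp add: c_def emb_def f_def)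
          have f1: "of_int \<lfloor>a j / \<delta>\<rfloor> \<le> a j / \<delta>" by (rule of_int_floor_le)
          have f2: "a j / \<delta> < of_int \<lfloor>a j / \<delta>\<rfloor> + 1" by (rule real_of_int_floor_add_one_gt)
          have A: "\<delta> * of_int \<lfloor>a j / \<delta>\<rfloor> \<le> \<delta> * (a j / \<delta>)" using f1 d by (intro mult_left_mono) auto
          have B: "\<delta> * (a j / \<delta>) < \<delta> * (of_int \<lfloor>a j / \<delta>\<rfloor> + 1)" using f2 d by (intro mult_strict_left_mono) auto
          have B': "\<delta> * (a j / \<delta>) < \<delta> * of_int \<lfloor>a j / \<delta>\<rfloor> + \<delta>" using B by (simp add: distrib_left)
          have E: "\<delta> * (a j / \<delta>) = a j" using d by simp
          have "c j \<le> a j" "a j < c j + \<delta>" using A B' E \<open>c j = _\<close> by linarith+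
          then show ?thesis using True by (simp add: dd_def)
        qed (simp add: dd_def less_imp_le[OF d])
        have ddsupp: "\<And>j. M < j \<Longrightarrow> dd j = 0" by (simp add: dd_def)
        have "pw_pow p w dd \<le> ennreal (\<Sum>j\<le>M. \<bar>dd j\<bar> powr p)" by (rule fin_support_bound[OF ws p0 ddsupp])
        also have "(\<Sum>j\<le>M. \<bar>dd j\<bar> powr p) \<le> (\<Sum>j\<le>M. \<delta> powr p)"
          using ddb p by (intro sum_mono powr_mono2) auto
        also have "\<dots> = e1" using dp by simp
        finally have ddp: "pw_pow p w dd \<le> ennreal e1" by (simp add: ennreal_leI)
        have split: "(a - c) j = dd j + (if M < j then a j else 0)" for j
          by (simp add: dd_def c_def emb_def)
        have "pw_pow p w (a - c) \<le> ennreal (2 powr p * (e1 + 2 * e1))"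
          by (rule qt_real[OF split wf(2) p0 ddp tailM[OF aA]]) (use e1 in auto)
        also have "2 powr p * (e1 + 2 * e1) \<le> \<eta> powr p" by (simp add: e1_def)
        finally have "pw_pow p w (a - c) \<le> ennreal (\<eta> powr p)" by (simp add: ennreal_leI order_trans)
        hence "normpw p w (a - c) \<le> (\<eta> powr p) powr (1/p)" by (rule le_imp_norm) (use p in auto)
        also have "\<dots> = \<eta>" using eta p by (simp add: powr_powr)
        finally show ?thesis using cF AL aA by blast
      qed
      show "\<exists>F. finite F \<and> F \<subseteq> Lpw p w \<and> A \<subseteq> (\<Union>c\<in>F. {b \<in> Lpw p w. normpw p w (b - c) \<le> \<eta>})"
        using finF FL cover by blast
    qed
  qed
qed

end
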